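(* Let $n$ and $0<n_1<\cdots<n_d<n$ be integers with $m_1=n_1$, $m_k=n_k-n_{k-1}$ ($2\le k\le d$), $m_{d+1}=n-n_d$, and regard $\mathrm{Flag}(n_1,\dots,n_d;n)=\{(VJ_1V^{\mathsf T},\dots,VJ_dV^{\mathsf T}):V\in\mathrm{O}(n)\}$ as a submanifold of $(\mathbb{R}^{n\times n})^d$ with the Euclidean (Frobenius) inner product $\langle (X_k),(Y_k)\rangle=\sum_k\operatorname{tr}(X_k^{\mathsf T}Y_k)$. Let $V(t)$ be a differentiable curve in $\mathrm{O}(n)$, $\Lambda(t)=V(t)^{\mathsf T}\dot V(t)\in\mathfrak{so}(n)$, and assume $\Lambda(p,p)(t)\equiv 0$ for $p=1,\dots,d+1$. Let $c(t)=V(t)(J_1,\dots,J_d)V(t)^{\mathsf T}$ and \[ T_2(t)=V(t)\big(\Lambda(t)^2J_1+J_1\Lambda(t)^2,\dots,\Lambda(t)^2J_d+J_d\Lambda(t)^2\big)V(t)^{\mathsf T}. \] Then the orthogonal projection of $T_2(t)$ onto $\mathbb{T}_{c(t)}\mathrm{Flag}(n_1,\dots,n_d;n)$ is zero.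
   Context: $J_k=\operatorname{diag}(-I_{m_1},\dots,-I_{m_{k-1}},I_{m_k},-I_{m_{k+1}},\dots,-I_{m_{d+1}})$. $V(X_1,\dots,X_d)V^{\mathsf T}$ denotes $(VX_1V^{\mathsf T},\dots,VX_dV^{\mathsf T})$. For an $n\times n$ matrix $M$, $M(p,q)$ denotes its $(p,q)$ block in the partition $n=m_1+\cdots+m_{d+1}$. *)

theory Defs
  imports "HOL-Analysis.Analysis"
begin

text \<open>Matrices are real^'n^'n; the index type 'n is finite and linearly ordered,
  so index i sits at (0-based) position card {j. j < i}.  The partition
  n = m_1 + ... + m_(d+1) is given by the cut points ns 1 < ... < ns d.\<close>

definition idx_pos :: "'n::{finite,linorder} \<Rightarrow> nat" where
  "idx_pos i = card {j. j < i}"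

definition blk :: "(nat \<Rightarrow> nat) \<Rightarrow> nat \<Rightarrow> 'n::{finite,linorder} \<Rightarrow> nat" where
  "blk ns d i = card {k \<in> {1..d}. ns k \<le> idx_pos i} + 1"

definition Jmat :: "(nat \<Rightarrow> nat) \<Rightarrow> nat \<Rightarrow> nat \<Rightarrow> real^('n::{finite,linorder})^('n::{finite,linorder})" where
  "Jmat ns d k = (\<chi> i. \<chi> j. if i = j then (if blk ns d i = k then 1 else -1) else 0)"

text \<open>Elements of (R^(n x n))^d are functions k \<mapsto> X_k, relevant for k in {1..d}.\<close>
definition tuple_conj :: "nat \<Rightarrow> real^('n::finite)^('n::finite) \<Rightarrow> (nat \<Rightarrow> real^'n^'n) \<Rightarrow> (nat \<Rightarrow> real^'n^'n)" where
  "tuple_conj d V X = (\<lambda>k. if k \<in> {1..d} then V ** X k ** transpose V else 0)"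

definition flag_set :: "(nat \<Rightarrow> nat) \<Rightarrow> nat \<Rightarrow> (nat \<Rightarrow> real^('n::{finite,linorder})^('n::{finite,linorder})) set" where
  "flag_set ns d = {tuple_conj d V (Jmat ns d) | V. orthogonal_matrix V}"

definition frob_inner :: "nat \<Rightarrow> (nat \<Rightarrow> real^('n::finite)^('n::finite)) \<Rightarrow> (nat \<Rightarrow> real^'n^'n) \<Rightarrow> real" where
  "frob_inner d X Y = (\<Sum>k=1..d. \<Sum>i\<in>UNIV. \<Sum>j\<in>UNIV. X k $ i $ j * Y k $ i $ j)"

text \<open>Tangent space of a subset S of (R^(n x n))^d at c: velocities at 0 of curves
  through c that stay in S near 0 (for an embedded submanifold this is the tangent space).\<close>
definition tangent_space :: "(nat \<Rightarrow> real^('n::finite)^('n::finite)) set \<Rightarrow> (nat \<Rightarrow> real^'n^'n) \<Rightarrow> (nat \<Rightarrow> real^'n^'n) set" where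
  "tangent_space S c = {v. \<exists>\<gamma> e. e > 0 \<and> \<gamma> 0 = c \<and> (\<forall>t. \<bar>t\<bar> < e \<longrightarrow> \<gamma> t \<in> S) \<and>
       (\<forall>k. ((\<lambda>t. \<gamma> t k) has_vector_derivative v k) (at 0))}"

definition orth_proj :: "nat \<Rightarrow> (nat \<Rightarrow> real^('n::finite)^('n::finite)) set \<Rightarrow> (nat \<Rightarrow> real^'n^'n) \<Rightarrow> (nat \<Rightarrow> real^'n^'n)" where
  "orth_proj d T x = (THE p. p \<in> T \<and> (\<forall>w\<in>T. frob_inner d (\<lambda>k. x k - p k) w = 0))"

end

theory Submission
  imports Defs
begin

lemma madd_r: "((A::real^'n^'m) + B) ** C = A ** C + B ** C"
  by (vector matrix_matrix_mult_def sum.distrib[symmetric] field_simps)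

lemma transpose_add': "transpose ((A::real^'n^'m) + B) = transpose A + transpose B"
  by (simp add: transpose_def vec_eq_iff)

lemma bb_mat: "bounded_bilinear (\<lambda>(A::real^'n^'n) B. A ** B)"
proof -
  have "bilinear (\<lambda>(A::real^'n^'n) B. A ** B)"
    unfolding bilinear_def
    by (auto intro!: linearI simp: matrix_add_ldistrib madd_r scalar_matrix_assoc matrix_scalar_ac)
  then show ?thesis using bilinear_conv_bounded_bilinear by blast
qed

lemma frob_trace: "(\<Sum>i\<in>UNIV. \<Sum>j\<in>UNIV. (A::real^'n^'n) $ i $ j * B $ i $ j)
   = trace (transpose A ** B)"
  unfolding trace_def matrix_matrix_mult_def transpose_def
  by (simp, subst sum.swap, simp)

lemma Jmat_sym:
  fixes ns :: "nat \<Rightarrow> nat"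
  shows "transpose (Jmat ns d k :: real^('n::{finite,linorder})^('n::{finite,linorder})) = Jmat ns d k"
  by (simp add: transpose_def Jmat_def vec_eq_iff)

lemma Jmat_sq:
  fixes ns :: "nat \<Rightarrow> nat"
  shows "(Jmat ns d k :: real^('n::{finite,linorder})^('n::{finite,linorder})) ** Jmat ns d k = mat 1"
    (is "?J ** ?J = _")
proof -
  define s where "s = (\<lambda>i. ?J $ i $ i)"
  have J: "?J $ i $ j = (if i = j then s i else 0)" for i j
    by (simp add: Jmat_def s_def)
  have ss: "s i * s i = 1" for i by (simp add: s_def Jmat_def)
  have "(?J ** ?J) $ i $ j = mat 1 $ i $ j" for i j
  proof -
    have "(?J ** ?J) $ i $ j = (\<Sum>l\<in>UNIV. (if i = l then s i * ?J $ l $ j else 0))"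
      unfolding matrix_matrix_mult_def vec_lambda_beta
      by (rule sum.cong) (simp_all only: J[of i] refl, auto)
    also have "\<dots> = s i * ?J $ i $ j"
      by simp
    finally show ?thesis by (simp add: J ss mat_def)
  qed
  then show ?thesis by (simp add: vec_eq_iff)
qed

lemma conj_sq:
  assumes "orthogonal_matrix (U::real^'n^'n)" and "J ** J = mat 1"
  shows "(U ** J ** transpose U) ** (U ** J ** transpose U) = mat 1"
proof -
  have o: "transpose U ** U = mat 1" "U ** transpose U = mat 1"
    using assms(1) unfolding orthogonal_matrix_def by auto
  have "(U ** J ** transpose U) ** (U ** J ** transpose U) = U ** J ** (transpose U ** U) ** J ** transpose U"
    by (simp add: matrix_mul_assoc)
  also have "\<dots> = U ** (J ** J) ** transpose U" by (simp add: o matrix_mul_assoc)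
  also have "\<dots> = mat 1" using assms(2) o by simp
  finally show ?thesis .
qed

lemma key_trace:
  assumes C: "transpose C = (C::real^'n^'n)" and W: "C ** W + W ** C = 0"
  shows "trace (transpose (L ** C + C ** L) ** W) = 0"
proof -
  have "transpose (L ** C + C ** L) = C ** transpose L + transpose L ** C"
    by (simp add: transpose_add' matrix_transpose_mul C)
  then have "trace (transpose (L ** C + C ** L) ** W)
      = trace (C ** transpose L ** W) + trace (transpose L ** C ** W)"
    by (simp add: madd_r trace_add)
  also have "trace (C ** transpose L ** W) = trace (transpose L ** W ** C)"
    by (metis trace_mul_sym matrix_mul_assoc)
  also have "trace (transpose L ** W ** C) + trace (transpose L ** C ** W)
     = trace (transpose L ** (W ** C + C ** W))"
    by (simp add: matrix_add_ldistrib trace_add matrix_mul_assoc)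
  also have "W ** C + C ** W = 0" using W by (simp add: add.commute)
  finally show ?thesis by (simp add: trace_def)
qed

lemma key_conj:
  assumes o: "orthogonal_matrix (V::real^'n^'n)" and J: "transpose J = J"
    and W: "(V ** J ** transpose V) ** W + W ** (V ** J ** transpose V) = 0"
  shows "trace (transpose (V ** (L ** J + J ** L) ** transpose V) ** W) = 0"
proof -
  have o1: "transpose V ** V = mat 1"
    using o unfolding orthogonal_matrix_def by auto
  let ?C = "V ** J ** transpose V" and ?L = "V ** L ** transpose V"
  have "V ** (L ** J + J ** L) ** transpose V = ?L ** ?C + ?C ** ?L"
  proof -
    have "?L ** ?C = V ** L ** (transpose V ** V) ** J ** transpose V"
      by (simp add: matrix_mul_assoc)
    also have "\<dots> = V ** (L ** J) ** transpose V" by (simp add: o1 matrix_mul_assoc)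
    finally have 1: "?L ** ?C = V ** (L ** J) ** transpose V" .
    have "?C ** ?L = V ** J ** (transpose V ** V) ** L ** transpose V"
      by (simp add: matrix_mul_assoc)
    also have "\<dots> = V ** (J ** L) ** transpose V" by (simp add: o1 matrix_mul_assoc)
    finally have 2: "?C ** ?L = V ** (J ** L) ** transpose V" .
    show ?thesis by (simp add: 1 2 matrix_add_ldistrib madd_r)
  qed
  moreover have "transpose ?C = ?C" by (simp add: matrix_transpose_mul J matrix_mul_assoc)
  ultimately show ?thesis using key_trace[OF _ W] by simp
qed

lemma tangent_props:
  fixes ns :: "nat \<Rightarrow> nat"
  assumes w: "w \<in> tangent_space (flag_set ns d) (c :: nat \<Rightarrow> real^('n::{finite,linorder})^('n::{finite,linorder}))"
  shows "\<And>k. k \<in> {1..d} \<Longrightarrow> c k ** w k + w k ** c k = 0"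
    and "\<And>k. k \<notin> {1..d} \<Longrightarrow> w k = 0"
proof -
  obtain \<gamma> e where e: "e > 0" and g0: "\<gamma> 0 = c" and gS: "\<forall>t. \<bar>t\<bar> < e \<longrightarrow> \<gamma> t \<in> flag_set ns d"
    and gd: "\<forall>k. ((\<lambda>t. \<gamma> t k) has_vector_derivative w k) (at 0)"
    using w unfolding tangent_space_def by blast
  have inS: "\<exists>U. orthogonal_matrix U \<and> \<gamma> t = tuple_conj d U (Jmat ns d)" if "t \<in> ball 0 e" for t
    using gS that unfolding flag_set_def by (auto simp: dist_real_def)
  {
    fix k assume k: "k \<in> {1..d}"
    have sq: "\<gamma> t k ** \<gamma> t k = mat 1" if tb: "t \<in> ball 0 e" for t
    proof -
      obtain U where U: "orthogonal_matrix U" "\<gamma> t = tuple_conj d U (Jmat ns d)"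
        using inS[OF tb] by blast
      show ?thesis using conj_sq[OF U(1) Jmat_sq] k U(2) by (simp add: tuple_conj_def)
    qed
    have d1: "((\<lambda>t. \<gamma> t k ** \<gamma> t k) has_vector_derivative (\<gamma> 0 k ** w k + w k ** \<gamma> 0 k)) (at 0)"
      using bounded_bilinear.has_vector_derivative[OF bb_mat gd[rule_format, of k] gd[rule_format, of k]]
      by simp
    have d2: "((\<lambda>t. \<gamma> t k ** \<gamma> t k) has_vector_derivative 0) (at 0)"
      by (rule has_vector_derivative_transform_within_open[where f="\<lambda>_. mat 1" and S="ball 0 e"])
         (use e sq in auto)
    show "c k ** w k + w k ** c k = 0"
      using vector_derivative_unique_at[OF d1 d2] g0 by simp
  }
  {
    fix k assume k: "k \<notin> {1..d}"
    have z: "\<gamma> t k = 0" if "t \<in> ball 0 e" for t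
      using inS[OF that] k by (auto simp: tuple_conj_def)
    have d2: "((\<lambda>t. \<gamma> t k) has_vector_derivative 0) (at 0)"
      by (rule has_vector_derivative_transform_within_open[where f="\<lambda>_. 0" and S="ball 0 e"])
         (use e z in auto)
    show "w k = 0" using vector_derivative_unique_at[OF gd[rule_format, of k] d2] .
  }
qed

theorem lemma3p7:
  fixes ns :: "nat \<Rightarrow> nat" and d :: nat
    and V V' :: "real \<Rightarrow> real^('n::{finite,linorder})^('n::{finite,linorder})" and I :: "real set"
  assumes d_pos: "d \<ge> 1"
    and ns_first: "0 < ns 1"
    and ns_mono: "\<forall>k. 1 \<le> k \<and> k < d \<longrightarrow> ns k < ns (Suc k)"
    and ns_last: "ns d < CARD('n)"
    and I_open: "open I"
    and V_orth: "\<forall>t\<in>I. orthogonal_matrix (V t)"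
    and V_deriv: "\<forall>t\<in>I. (V has_vector_derivative V' t) (at t)"
    and diag_zero: "\<forall>t\<in>I. \<forall>i j. blk ns d i = blk ns d j \<longrightarrow>
                       (transpose (V t) ** V' t) $ i $ j = 0"
  shows "\<forall>t\<in>I.
    (let \<Lambda> = transpose (V t) ** V' t;
         c = tuple_conj d (V t) (Jmat ns d);
         T2 = tuple_conj d (V t) (\<lambda>k. \<Lambda> ** \<Lambda> ** Jmat ns d k + Jmat ns d k ** \<Lambda> ** \<Lambda>)
     in orth_proj d (tangent_space (flag_set ns d) c) T2 = (\<lambda>k. 0))"
proof
  fix t assume t: "t \<in> I"
  define L where "L = transpose (V t) ** V' t"
  define c where "c = tuple_conj d (V t) (Jmat ns d)"
  define T2 where "T2 = tuple_conj d (V t) (\<lambda>k. L ** L ** Jmat ns d k + Jmat ns d k ** L ** L)"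
  define T where "T = tangent_space (flag_set ns d) c"
  have Vo: "orthogonal_matrix (V t)" using V_orth t by blast
  have orthT2: "frob_inner d T2 w = 0" if "w \<in> T" for w
  proof -
    have "(\<Sum>i\<in>UNIV. \<Sum>j\<in>UNIV. T2 k $ i $ j * w k $ i $ j) = 0" if k: "k \<in> {1..d}" for k
    proof -
      have W: "c k ** w k + w k ** c k = 0"
        using tangent_props(1)[OF \<open>w \<in> T\<close>[unfolded T_def] k] .
      have "T2 k = V t ** ((L ** L) ** Jmat ns d k + Jmat ns d k ** (L ** L)) ** transpose (V t)"
        using k by (simp add: T2_def tuple_conj_def matrix_mul_assoc)
      moreover have "c k = V t ** Jmat ns d k ** transpose (V t)"
        using k by (simp add: c_def tuple_conj_def)
      ultimately show ?thesis
        using key_conj[OF Vo Jmat_sym, of ns d k "w k" "L ** L"] W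
        by (simp add: frob_trace)
    qed
    then show ?thesis unfolding frob_inner_def by simp
  qed
  have zT: "(\<lambda>k. 0) \<in> T"
  proof -
    have "c \<in> flag_set ns d" using Vo unfolding c_def flag_set_def by blast
    then show ?thesis unfolding T_def tangent_space_def
      by (intro CollectI exI[of _ "\<lambda>_. c"] exI[of _ 1]) auto
  qed
  have "orth_proj d T T2 = (\<lambda>k. 0)"
    unfolding orth_proj_def
  proof (rule the_equality)
    show "(\<lambda>k. 0) \<in> T \<and> (\<forall>w\<in>T. frob_inner d (\<lambda>k. T2 k - (\<lambda>k. 0) k) w = 0)"
      using zT orthT2 by simp
  next
    fix p assume p: "p \<in> T \<and> (\<forall>w\<in>T. frob_inner d (\<lambda>k. T2 k - p k) w = 0)"
    have "frob_inner d (\<lambda>k. T2 k - p k) p = frob_inner d T2 p - frob_inner d p p"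
      unfolding frob_inner_def by (simp add: left_diff_distrib sum_subtractf)
    then have pp: "frob_inner d p p = 0" using p orthT2 by simp
    have "\<forall>k\<in>{1..d}. \<forall>i\<in>UNIV. \<forall>j\<in>UNIV. p k $ i $ j * p k $ i $ j = 0"
      using pp unfolding frob_inner_def
      by (simp add: sum_nonneg_eq_0_iff sum_nonneg)
    then have "p k = 0" for k
      using tangent_props(2)[of p ns d c k] p unfolding T_def
      by (cases "k \<in> {1..d}") (auto simp: vec_eq_iff)
    then show "p = (\<lambda>k. 0)" by auto
  qed
  then show "let \<Lambda> = transpose (V t) ** V' t;
         c = tuple_conj d (V t) (Jmat ns d);
         T2 = tuple_conj d (V t) (\<lambda>k. \<Lambda> ** \<Lambda> ** Jmat ns d k + Jmat ns d k ** \<Lambda> ** \<Lambda>)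
     in orth_proj d (tangent_space (flag_set ns d) c) T2 = (\<lambda>k. 0)"
    by (simp add: L_def c_def T2_def T_def Let_def)
qed

end
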